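(* Let $a,b\in\mathbb{R}$ satisfy $\frac13<a-b<\frac4{\pi^2}$ and $\frac2\pi-b<a\le\frac12$. Suppose moreover that $16ab(b-a)+(a+b)^2>0$ and that \[ x_1=\frac{(a+b)(2b-2a+1)-\sqrt{16ab(b-a)+(a+b)^2}}{2(a-b)^2}>0 . \] Then for all $x\in(0,1)$, \[ L(x)\le \arccos x\le \frac{(1+x_1)^{b+1/2}(1-x_1)^{1/2-a}}{a+b+(a-b)x_1}\cdot\frac{(1-x)^a}{(1+x)^b}, \] where $L(x)=\min\{2^{b+1/2},\frac{\pi}{2}\}\dfrac{(1-x)^a}{(1+x)^b}$ if $a=\frac12$, and $L(x)=0$ if $a<\frac12$.
   Context: $\arccos$ denotes the principal inverse cosine with values in $[0,\pi]$. *)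

theory Defs
  imports "HOL-Analysis.Analysis"
begin

end

theory Submission
  imports Defs
begin

lemma id1: "r^2 = 16*a*b*(b - a) + (a + b)^2 \<Longrightarrow> (r::real)^2 - ((a + b)*(2*b - 2*a + 1) - 2*(a-b)^2)^2 = 4*(a-b)^2*(2*a*(1-2*a))"
   by (simp add: power2_eq_square algebra_simps)
lemma id2: "((1/2::real) + b)*(2*b - 2*(1/2) + 1) - 2*(1/2-b)^2 = 3*b - 1/2"
   by (simp add: power2_eq_square algebra_simps)
lemma id3: "(2::real)*(a-b)^2 > 0 \<Longrightarrow> P - r < 2*(a-b)^2 \<Longrightarrow> (P - r) / (2*(a-b)^2) < 1"
  by (simp add: pos_divide_less_eq)

lemma h1: "-1 < x \<Longrightarrow> x < 1 \<Longrightarrow> ((\<lambda>x. ln (arccos x)) has_real_derivative (1/arccos x) * inverse(-sqrt(1-x^2))) (at x)"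
  by (rule DERIV_chain2[OF DERIV_ln_divide DERIV_arccos]) (auto simp: arccos_lt_bounded)
lemma h2: "-1 < x \<Longrightarrow> ((\<lambda>x. ln (1+x)) has_real_derivative 1/(1+x)) (at x)"
  by (auto intro!: derivative_eq_intros)
lemma h3: "x < 1 \<Longrightarrow> ((\<lambda>x. ln (1-x)) has_real_derivative -1/(1-x)) (at x)"
  by (auto intro!: derivative_eq_intros)
lemma h4: "-1 < x \<Longrightarrow> x < 1 \<Longrightarrow> ((\<lambda>x. sqrt (1 - x^2)) has_real_derivative -x / sqrt(1-x^2)) (at x)"
proof -
  assume x: "-1 < x" "x < 1"
  have p: "1 - x^2 > 0" using x by (simp add: abs_square_less_1)
  have "((\<lambda>x. 1 - x^2) has_real_derivative -(2*x)) (at x)" by (auto intro!: derivative_eq_intros)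
  from DERIV_chain2[OF DERIV_real_sqrt[OF p] this]
  show ?thesis by (rule DERIV_cong) (simp add: divide_simps)
qed
lemma h5: "((\<lambda>x. p + q*x) has_real_derivative q) (at x)"
  by (auto intro!: derivative_eq_intros)

lemma cos_lb: assumes "(t::real) \<ge> 0" shows "1 - t^2/2 \<le> cos t"
proof -
  let ?f = "\<lambda>x::real. cos x - 1 + x^2/2"
  have "?f 0 \<le> ?f t"
    by (rule DERIV_nonneg_imp_nondecreasing[OF assms])
       (auto intro!: exI derivative_eq_intros simp: sin_x_le_x)
  then show ?thesis by simp
qed

lemma sin_lb: assumes "(t::real) \<ge> 0" shows "t - t^3/6 \<le> sin t"
proof -
  let ?f = "\<lambda>x::real. sin x - x + x^3/6"
  have d: "(?f has_real_derivative (cos x - 1 + x^2/2)) (at x)" for x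
    by (auto intro!: derivative_eq_intros)
  have "?f 0 \<le> ?f t"
    by (rule DERIV_nonneg_imp_nondecreasing[OF assms]) (use d cos_lb in fastforce)
  then show ?thesis by simp
qed

lemma cos_ub: assumes "(t::real) \<ge> 0" shows "cos t \<le> 1 - t^2/2 + t^4/24"
proof -
  let ?f = "\<lambda>x::real. 1 - x^2/2 + x^4/24 - cos x"
  have d: "(?f has_real_derivative (sin x - x + x^3/6)) (at x)" for x
    by (auto intro!: derivative_eq_intros)
  have "?f 0 \<le> ?f t"
    by (rule DERIV_nonneg_imp_nondecreasing[OF assms]) (use d sin_lb in fastforce)
  then show ?thesis by simp
qed


lemma key_ineq: fixes s d t :: real
  assumes d: "d > 1/3" and sd: "s + d \<le> 1" and t: "t > 0" and dt: "d*t^2 < 6*d - 2"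
  shows "(s + d*cos t)*t < sin t"
proof -
  define C where "C = 1 - t^2/2 + t^4/24"
  have cC: "cos t \<le> C" unfolding C_def using cos_ub t by simp
  have "(s + d*cos t)*t \<le> (s + d*C)*t"
    using cC d t by (intro mult_right_mono add_left_mono mult_left_mono) auto
  also have "\<dots> \<le> (1 - d + d*C)*t" using sd t by (intro mult_right_mono) auto
  also have "\<dots> = t - d*t^3/2 + d*t^5/24" unfolding C_def by algebra
  finally have l: "(s + d*cos t)*t \<le> t - d*t^3/2 + d*t^5/24" .
  have sl: "t - t^3/6 \<le> sin t" using sin_lb t by simp
  have "t^3 * (d/2 - 1/6 - d*t^2/24) > 0" using t d dt by (intro mult_pos_pos) auto
  moreover have "t^3 * (d/2 - 1/6 - d*t^2/24) = d*t^3/2 - t^3/6 - d*t^5/24" by algebra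
  ultimately show ?thesis using l sl by linarith
qed

lemma algP: fixes q A Dv d u :: real
  assumes q: "q > 0" and AD: "Dv*A = q" and q2: "q^2 = 1-u^2"
  shows "((d*A + Dv*inverse(-q)) - (-u/q)) * (Dv*q) = d*(1-u^2) - Dv^2 + u*Dv"
proof -
  have "((d*A + Dv*inverse(-q)) - (-u/q)) * (Dv*q) = d*(Dv*A)*q - Dv*Dv + u*Dv"
    using q by (simp add: field_simps)
  also have "\<dots> = d*(1-u^2) - Dv^2 + u*Dv" unfolding AD q2[symmetric] by (simp add: power2_eq_square)
  finally show ?thesis .
qed

lemma no_cross:
  fixes f f' :: "real \<Rightarrow> real"
  assumes pr: "p \<le> r" and cont: "continuous_on {p..r} f"
    and der: "\<And>u. p \<le> u \<Longrightarrow> u < r \<Longrightarrow> f u = 0 \<Longrightarrow> (f has_real_derivative f' u) (at u) \<and> f' u < 0"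
    and fp: "f p \<le> 0"
  shows "f r \<le> 0"
proof (rule ccontr)
  assume "\<not> f r \<le> 0"
  hence fr: "f r > 0" by simp
  define S where "S = {x \<in> {p..r}. f x = 0}"
  obtain z where z: "p \<le> z" "z \<le> r" "f z = 0" using IVT'[of f p 0 r] fp fr pr cont by auto
  have Sne: "S \<noteq> {}" using z S_def by auto
  have Sb: "bdd_above S" unfolding S_def by (rule bdd_aboveI[of _ r]) auto
  have Sc: "closed S" unfolding S_def by (rule continuous_closed_preimage_constant[OF cont]) simp
  define u where "u = Sup S"
  have uS: "u \<in> S" using closed_contains_Sup[OF Sne Sb Sc] u_def by simp
  have ur: "u < r" using uS fr S_def by (auto simp: less_le)
  have up: "p \<le> u" and fu: "f u = 0" using uS S_def by auto
  from der[OF up ur fu] have D: "(f has_real_derivative f' u) (at u)" "f' u < 0" by auto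
  from DERIV_neg_dec_right[OF D] obtain d where d: "d > 0" "\<forall>h>0. h < d \<longrightarrow> f u > f (u + h)" by blast
  define h where "h = min (d/2) ((r-u)/2)"
  have h1a: "h \<le> d/2" unfolding h_def by (rule min.cobounded1)
  have h1b: "h \<le> (r-u)/2" unfolding h_def by (rule min.cobounded2)
  have h1c: "h > 0" unfolding h_def using d ur by simp
  note h1 = h1a h1b h1c
  have h2: "h < d" using h1 d by linarith
  have h3: "u + h < r" using h1b ur by argo
  note h = h1c h2 h3
  have fv: "f (u+h) < 0" using d h fu by auto
  have "continuous_on {u+h..r} f" using cont by (rule continuous_on_subset) (use up h in auto)
  then obtain w where w: "u+h \<le> w" "w \<le> r" "f w = 0" using IVT'[of f "u+h" 0 r] fv fr h by auto
  have "w \<in> S" using w up h unfolding S_def by auto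
  hence "w \<le> u" unfolding u_def by (rule cSup_upper[OF _ Sb])
  thus False using w h by auto
qed


lemma comb3: "(X + Y - W) * Z = X*Z + Y*Z - W*(Z::real)" by (simp add: algebra_simps)

lemma algG: fixes A q x a b :: real
  assumes A: "A > 0" and q: "q > 0" "q^2 = 1 - x^2" and x: "1+x > 0" "1-x>0"
  shows "(1/A) * inverse(-q) + b*(1/(1+x)) - a*(-1/(1-x)) = ((a+b+(a-b)*x)*A - q)/((1-x^2)*A)"
proof -
  have e: "1 - x^2 = (1+x)*(1-x)" by (simp add: power2_eq_square algebra_simps)
  have Z: "(1-x^2)*A \<noteq> 0" using A x e by simp
  have t1: "(1/A) * inverse(-q) * ((1-x^2)*A) = -q" unfolding q(2)[symmetric] using A q by (simp add: power2_eq_square field_simps)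
  have t2: "b*(1/(1+x)) * ((1-x^2)*A) = b*(1-x)*A" using x unfolding e by simp
  have t3: "a*(-1/(1-x)) * ((1-x^2)*A) = -a*(1+x)*A" using x unfolding e by simp
  have "((1/A) * inverse(-q) + b*(1/(1+x)) - a*(-1/(1-x))) * ((1-x^2)*A) = -q + b*(1-x)*A - (-a*(1+x)*A)"
    unfolding comb3 t1 t2 t3 ..
  also have "\<dots> = (a+b+(a-b)*x)*A - q" by (simp add: algebra_simps)
  finally show ?thesis using Z by (simp add: eq_divide_eq)
qed

locale L =
 fixes a b x1 :: real
 assumes d13: "1/3 < a - b" and ab: "2/pi - b < a" and ahalf: "a \<le> 1/2"
  and Dpos: "16*a*b*(b - a) + (a + b)^2 > 0"
  and x1def: "x1 = ((a + b)*(2*b - 2*a + 1) - sqrt (16*a*b*(b - a) + (a + b)^2)) / (2*(a - b)^2)"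
  and x1pos: "x1 > 0"
begin

definition "r = sqrt (16*a*b*(b - a) + (a + b)^2)"
definition "x2 = ((a + b)*(2*b - 2*a + 1) + r) / (2*(a - b)^2)"
definition "N x = (a-b)^2*x^2 + (a+b)*(2*(a-b)-1)*x + (a+b)^2 - (a-b)"

lemma spos: "a + b > 2/pi" using ab by linarith
lemma pi_facts: "2/pi > 1/2" "2/pi < 1" using pi_gt3 pi_less_4 by (auto simp: field_simps)
lemma bpos: "b > 0" using ab ahalf pi_facts by linarith
lemma apos: "a > 0" using bpos d13 by linarith
lemma r_facts: "r \<ge> 0" "r^2 = 16*a*b*(b - a) + (a + b)^2" using Dpos unfolding r_def by auto

lemma x1r: "x1 = ((a + b)*(2*b - 2*a + 1) - r) / (2*(a - b)^2)" using x1def r_def by simp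

lemma prod_gen: "((P::real) - r)/Q * ((P + r)/Q) = (P^2 - r^2)/Q^2"
  by (simp add: power2_eq_square algebra_simps)

lemma Nfact: "N x = (a-b)^2 * (x - x1) * (x - x2)"
proof -
  have dd: "(a-b)^2 > 0" using d13 by simp
  have sum: "x1 + x2 = (a + b)*(2*b - 2*a + 1) / (a-b)^2" unfolding x1r x2_def
    using dd by (simp add: add_divide_distrib[symmetric])
  have "x1 * x2 = (((a + b)*(2*b - 2*a + 1))^2 - r^2) / (2*(a - b)^2)^2" unfolding x1r x2_def
    by (rule prod_gen)
  also have "\<dots> = (4*(a-b)^2*((a+b)^2 - (a-b))) / (2*(a - b)^2)^2"
  proof -
    have "((a + b)*(2*b - 2*a + 1))^2 - (16*a*b*(b - a) + (a + b)^2) = 4*(a-b)^2*((a+b)^2 - (a-b))"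
      by algebra
    thus ?thesis unfolding r_facts(2) by simp
  qed
  also have "\<dots> = ((a+b)^2 - (a-b)) / (a-b)^2" using dd
    by (simp add: power2_eq_square)
  finally have prod: "x1 * x2 = ((a+b)^2 - (a-b)) / (a-b)^2" .
  have s2: "(a-b)^2*(x1+x2) = (a + b)*(2*b - 2*a + 1)" using sum dd by simp
  have p2: "(a-b)^2*(x1*x2) = (a+b)^2 - (a-b)" using prod dd by simp
  have "(a-b)^2 * (x - x1) * (x - x2) = (a-b)^2*x^2 - ((a-b)^2*(x1+x2))*x + (a-b)^2*(x1*x2)"
    by (simp add: algebra_simps power2_eq_square)
  also have "\<dots> = N x" unfolding s2 p2 N_def by (simp add: algebra_simps)
  finally show ?thesis ..
qed

lemma x1_le_x2: "x1 \<le> x2"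
proof -
  have "(a + b)*(2*b - 2*a + 1) - r \<le> (a + b)*(2*b - 2*a + 1) + r" using r_facts by linarith
  moreover have "0 \<le> 2*(a - b)^2" by simp
  ultimately show ?thesis unfolding x1r x2_def by (rule divide_right_mono)
qed

lemma x1_lt1: "x1 < 1"
proof -
  have dd: "2*(a-b)^2 > 0" using d13 by simp
  have "(a + b)*(2*b - 2*a + 1) - r < 2*(a-b)^2"
  proof (cases "(a + b)*(2*b - 2*a + 1) - 2*(a-b)^2 < 0")
    case True then show ?thesis using r_facts by linarith
  next
    case False
    show ?thesis
    proof (cases "a = 1/2")
      case True
      have "(a + b)*(2*b - 2*a + 1) - 2*(a-b)^2 = 3*b - 1/2" unfolding True by (rule id2)
      then show ?thesis using False d13 True by linarith
    next
      case F2: False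
      hence a2: "a < 1/2" using ahalf by simp
      have "r^2 - ((a + b)*(2*b - 2*a + 1) - 2*(a-b)^2)^2 = 4*(a-b)^2*(2*a*(1-2*a))"
        by (rule id1[OF r_facts(2)])
      moreover have "4*(a-b)^2*(2*a*(1-2*a)) > 0" by (rule mult_pos_pos[OF mult_pos_pos]) (use a2 apos d13 in auto)
      ultimately have "((a + b)*(2*b - 2*a + 1) - 2*(a-b)^2)^2 < r^2" by linarith
      hence "(a + b)*(2*b - 2*a + 1) - 2*(a-b)^2 < r"
        by (rule power2_less_imp_less[OF _ r_facts(1)])
      then show ?thesis by linarith
    qed
  qed
  thus ?thesis unfolding x1r by (rule id3[OF dd])
qed

lemma N1: "N 1 \<le> 0"
proof -
  have "N 1 = 2*a*(2*a-1)" unfolding N_def by (simp add: power2_eq_square algebra_simps)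
  thus ?thesis using apos ahalf by (simp add: mult_nonneg_nonpos)
qed

lemma x2_ge1: "x2 \<ge> 1"
proof (rule ccontr)
  assume "\<not> 1 \<le> x2"
  hence "N 1 > 0" unfolding Nfact using x1_lt1 d13 by (simp add: mult_pos_pos)
  thus False using N1 by simp
qed

lemma N_pos: assumes "x < x1" shows "N x > 0"
proof -
  have "(x-x1)*(x-x2) > 0" using assms x1_le_x2 by (intro mult_neg_neg) auto
  moreover have "(a-b)^2 > 0" using d13 by simp
  ultimately show ?thesis unfolding Nfact by (metis mult.assoc mult_pos_pos)
qed

lemma N_neg: assumes "x1 < x" "x < 1" shows "N x < 0"
proof -
  have "(x-x1)*(x-x2) < 0" using assms x2_ge1 by (intro mult_pos_neg) auto
  moreover have "(a-b)^2 > 0" using d13 by simp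
  ultimately show ?thesis unfolding Nfact by (metis mult.assoc mult_pos_neg)
qed


definition "D x = (a+b) + (a-b)*x"
definition "P x = D x * arccos x - sqrt (1 - x^2)"
definition "G x = ln (arccos x) + b*ln(1+x) - a*ln(1-x)"
definition "H x = (b+1/2)*ln(1+x) + (1/2-a)*ln(1-x) - ln (D x)"
definition "Pd x = ((a-b) * arccos x + D x * inverse(-sqrt(1-x^2))) - (-x / sqrt(1-x^2))"

lemma basic: assumes "0 \<le> x" "x < 1"
  shows "D x > 0" "arccos x > 0" "sqrt (1-x^2) > 0" "1 - x^2 > 0"
proof -
  have "(a-b)*x \<ge> 0" using assms d13 by simp
  thus "D x > 0" unfolding D_def using spos pi_facts by linarith
  show "arccos x > 0" using assms arccos_lt_bounded by auto
  show "1 - x^2 > 0" using assms by (simp add: abs_square_less_1)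
  thus "sqrt (1-x^2) > 0" by simp
qed

lemma dG: assumes "0 \<le> x" "x < 1"
  shows "(G has_real_derivative P x / ((1-x^2)*arccos x)) (at x)"
proof -
  have "(G has_real_derivative (1/arccos x) * inverse(-sqrt(1-x^2)) + b*(1/(1+x)) - a*(-1/(1-x))) (at x)"
    unfolding G_def using assms
    by (intro DERIV_diff DERIV_add DERIV_cmult h1 h2 h3) auto
  moreover have "(1/arccos x) * inverse(-sqrt(1-x^2)) + b*(1/(1+x)) - a*(-1/(1-x)) = P x / ((1-x^2)*arccos x)"
    unfolding P_def D_def using basic[OF assms] assms by (intro algG) auto
  ultimately show ?thesis by (rule DERIV_cong)
qed

lemma dP: assumes "0 \<le> x" "x < 1"
  shows "(P has_real_derivative Pd x) (at x)"
proof -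
  have m: "((\<lambda>x. D x * arccos x) has_real_derivative (a-b) * arccos x + inverse(-sqrt(1-x^2)) * D x) (at x)"
    unfolding D_def by (rule DERIV_mult[OF h5 DERIV_arccos]) (use assms in auto)
  have "((\<lambda>x. D x * arccos x - sqrt (1 - x^2)) has_real_derivative ((a-b) * arccos x + inverse(-sqrt(1-x^2)) * D x) - (-x / sqrt(1-x^2))) (at x)"
    by (rule DERIV_diff[OF m h4]) (use assms in auto)
  thus ?thesis unfolding Pd_def P_def[abs_def] by (simp add: mult.commute)
qed

lemma dH: assumes "0 \<le> x" "x < 1"
  shows "(H has_real_derivative N x / ((1-x^2) * D x)) (at x)"
proof -
  have Dp: "D x > 0" using basic[OF assms] by simp
  have "(H has_real_derivative (b+1/2)*(1/(1+x)) + (1/2-a)*(-1/(1-x)) - (1/D x) * (a-b)) (at x)"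
    unfolding H_def using assms Dp
    by (intro DERIV_diff DERIV_add DERIV_cmult h2 h3 DERIV_chain2[OF DERIV_ln_divide] h5[of "a+b" "a-b", folded D_def]) (auto simp: D_def)
  moreover have "(b+1/2)*(1/(1+x)) + (1/2-a)*(-1/(1-x)) - (1/D x) * (a-b) = N x / ((1-x^2) * D x)"
  proof -
    have e: "1 - x^2 = (1+x)*(1-x)" by (simp add: power2_eq_square algebra_simps)
    have x: "1+x > 0" "1-x > 0" using assms by auto
    have Z: "(1-x^2)*D x \<noteq> 0" using Dp x e by simp
    have t1: "(b+1/2)*(1/(1+x)) * ((1-x^2)*D x) = (b+1/2)*(1-x)*D x" using x unfolding e by simp
    have t2: "(1/2-a)*(-1/(1-x)) * ((1-x^2)*D x) = -(1/2-a)*(1+x)*D x" using x unfolding e by (simp add: field_simps)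
    have t3: "(1/D x) * (a-b) * ((1-x^2)*D x) = (a-b)*(1-x^2)" using Dp by simp
    have "((b+1/2)*(1/(1+x)) + (1/2-a)*(-1/(1-x)) - (1/D x) * (a-b)) * ((1-x^2)*D x)
        = (b+1/2)*(1-x)*D x + (-(1/2-a)*(1+x)*D x) - (a-b)*(1-x^2)"
      unfolding comb3 t1 t2 t3 ..
    also have "\<dots> = N x" unfolding N_def D_def by algebra
    finally show ?thesis using Z by (simp add: eq_divide_eq)
  qed
  ultimately show ?thesis by (rule DERIV_cong)
qed


lemma Pd_zero: assumes "0 \<le> u" "u < 1" "P u = 0"
  shows "Pd u * (D u * sqrt (1-u^2)) = - N u"
proof -
  have AD: "D u * arccos u = sqrt (1-u^2)" using assms(3) unfolding P_def by simp
  have q2: "(sqrt (1-u^2))^2 = 1 - u^2" using basic[OF assms(1,2)] by simp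
  have "Pd u * (D u * sqrt (1-u^2)) = (a-b)*(1-u^2) - (D u)^2 + u*D u"
    unfolding Pd_def by (rule algP[OF basic(3)[OF assms(1,2)] AD q2])
  also have "\<dots> = - N u" unfolding D_def N_def by algebra
  finally show ?thesis .
qed

lemma Pd_neg: assumes "0 \<le> u" "u < x1" "P u = 0" shows "Pd u < 0"
proof -
  have u1: "u < 1" using assms x1_lt1 by simp
  have "Pd u * (D u * sqrt (1-u^2)) < 0" using Pd_zero[OF assms(1) u1 assms(3)] N_pos[OF assms(2)] by simp
  moreover have "D u * sqrt (1-u^2) > 0" using basic[OF assms(1) u1] by simp
  ultimately show ?thesis
    by (metis less_le_not_le linorder_le_less_linear mult_nonneg_nonneg order_less_imp_le)
qed

lemma Pd_pos: assumes "x1 < u" "u < 1" "P u = 0" shows "Pd u > 0"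
proof -
  have u0: "0 \<le> u" using assms x1pos by simp
  have "Pd u * (D u * sqrt (1-u^2)) > 0" using Pd_zero[OF u0 assms(2,3)] N_neg[OF assms(1,2)] by simp
  moreover have "D u * sqrt (1-u^2) > 0" using basic[OF u0 assms(2)] by simp
  ultimately show ?thesis by (simp add: zero_less_mult_iff)
qed

lemma P0: "P 0 > 0"
proof -
  have "(a+b)*pi > 2" using spos pi_gt_zero by (simp add: field_simps)
  thus ?thesis unfolding P_def D_def by simp
qed

lemma near1: "\<exists>c0<1. \<forall>y. c0 < y \<longrightarrow> y < 1 \<longrightarrow> P y < 0"
proof -
  define t0 where "t0 = min 1 (sqrt ((6*(a-b)-2)/(a-b)))"
  have dq: "(6*(a-b)-2)/(a-b) > 0" using d13 by (simp add: divide_pos_pos)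
  have t0: "0 < t0" "t0 \<le> 1" unfolding t0_def using dq by auto
  have t0pi: "t0 \<le> pi" using t0 pi_gt3 by linarith
  have c0: "cos t0 < 1" using cos_monotone_0_pi[of 0 t0] t0 t0pi by simp
  have "P y < 0" if y: "cos t0 < y" "y < 1" for y
  proof -
    have ym: "-1 < y" using y cos_ge_minus_one[of t0] by linarith
    define t where "t = arccos y"
    have tpos: "t > 0" unfolding t_def using arccos_lt_bounded ym y by auto
    have "t < arccos (cos t0)" unfolding t_def using arccos_less_arccos[of "cos t0" y] y by simp
    hence tt0: "t < t0" using arccos_cos[of t0] t0 t0pi by simp
    hence "t < sqrt ((6*(a-b)-2)/(a-b))" using t0_def by simp
    hence "t^2 < (sqrt ((6*(a-b)-2)/(a-b)))^2" using tpos by (intro power_strict_mono) auto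
    hence "t^2 < (6*(a-b)-2)/(a-b)" using dq by simp
    hence dt: "(a-b)*t^2 < 6*(a-b) - 2" using d13 by (simp add: pos_less_divide_eq mult.commute)
    have "((a+b) + (a-b)*cos t)*t < sin t"
      by (rule key_ineq) (use d13 ahalf tpos dt in auto)
    moreover have "cos t = y" "sin t = sqrt (1-y^2)" unfolding t_def using ym y sin_arccos by auto
    ultimately show ?thesis unfolding P_def D_def t_def by (simp add: mult.commute)
  qed
  thus ?thesis using c0 by blast
qed


lemma contP: "0 \<le> p \<Longrightarrow> q < 1 \<Longrightarrow> continuous_on {p..q} P"
  by (intro continuous_at_imp_continuous_on ballI DERIV_isCont[OF dP]) auto

lemma contG: "0 \<le> p \<Longrightarrow> q < 1 \<Longrightarrow> continuous_on {p..q} G"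
  by (intro continuous_at_imp_continuous_on ballI DERIV_isCont[OF dG]) auto

lemma G_crit: assumes "0 \<le> y" "y < 1" "P y = 0" shows "G y = H y"
proof -
  note bs = basic[OF assms(1,2)]
  have A: "arccos y = sqrt (1-y^2) / D y" using assms(3) bs unfolding P_def by (simp add: field_simps)
  have "ln (arccos y) = ln (sqrt (1-y^2)) - ln (D y)" unfolding A using bs by (simp add: ln_div)
  also have "ln (sqrt (1-y^2)) = ln (1-y^2) / 2" using bs by (simp add: ln_sqrt)
  also have "1 - y^2 = (1+y)*(1-y)" by (simp add: power2_eq_square algebra_simps)
  also have "ln ((1+y)*(1-y)) = ln (1+y) + ln (1-y)" using assms by (simp add: ln_mult)
  finally have "ln (arccos y) = (ln (1+y) + ln (1-y))/2 - ln (D y)" .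
  thus ?thesis unfolding G_def H_def by (simp add: algebra_simps)
qed

lemma H_max: assumes "0 \<le> y" "y < 1" shows "H y \<le> H x1"
proof (cases "y \<le> x1")
  case True
  show ?thesis
  proof (rule DERIV_nonneg_imp_nondecreasing[OF True])
    fix t assume t: "y \<le> t" "t \<le> x1"
    have t0: "0 \<le> t" "t < 1" using t assms x1_lt1 by auto
    have "N t \<ge> 0" using N_pos[of t] Nfact[of t] t by (cases "t < x1") auto
    moreover have "(1-t^2) * D t > 0" using basic[OF t0] by simp
    ultimately show "\<exists>y. (H has_real_derivative y) (at t) \<and> 0 \<le> y"
      using dH[OF t0] by (intro exI[of _ "N t / ((1-t^2) * D t)"]) auto
  qed
next
  case False
  show ?thesis
  proof (rule DERIV_nonpos_imp_nonincreasing[of x1 y])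
    show "x1 \<le> y" using False by simp
    fix t assume t: "x1 \<le> t" "t \<le> y"
    have t0: "0 \<le> t" "t < 1" using t assms x1pos by auto
    have "N t \<le> 0" using N_neg[of t] Nfact[of t] t t0 by (cases "x1 < t") auto
    moreover have "(1-t^2) * D t > 0" using basic[OF t0] by simp
    ultimately show "\<exists>y. (H has_real_derivative y) (at t) \<and> y \<le> 0"
      using dH[OF t0] by (intro exI[of _ "N t / ((1-t^2) * D t)"]) (auto simp: divide_nonpos_pos)
  qed
qed

lemma Gd_sign: assumes "0 \<le> x" "x < 1"
  shows "P x > 0 \<Longrightarrow> P x / ((1-x^2)*arccos x) > 0" "P x < 0 \<Longrightarrow> P x / ((1-x^2)*arccos x) < 0"
    "P x / ((1-x^2)*arccos x) = 0 \<Longrightarrow> P x = 0"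
  using basic[OF assms] by (auto simp: divide_pos_pos divide_neg_pos)

lemma upper: assumes x: "0 < x" "x < 1" shows "G x \<le> H x1"
proof -
  obtain c0 where c0: "c0 < 1" "\<forall>y. c0 < y \<longrightarrow> y < 1 \<longrightarrow> P y < 0" using near1 by blast
  define c where "c = (max x c0 + 1)/2"
  have c: "x < c" "c < 1" "c0 < c" using x c0 unfolding c_def by auto
  obtain y where y: "y \<in> {0..c}" "\<forall>z\<in>{0..c}. G z \<le> G y"
    using continuous_attains_sup[OF compact_Icc _ contG[of 0 c]] c x by auto
  have y01: "0 \<le> y" "y < 1" using y c by auto
  have "P y = 0"
  proof -
    consider "y = 0" | "y = c" | "0 < y \<and> y < c" using y by fastforce
    thus ?thesis
    proof cases
      case 1
      have "P 0 / ((1-0^2)*arccos 0) > 0" using Gd_sign(1)[of 0] P0 by simp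
      from DERIV_pos_inc_right[OF dG[of 0] this] obtain d where d: "d > 0" "\<forall>h>0. h < d \<longrightarrow> G 0 < G (0 + h)"
        by auto
      define h where "h = min (d/2) (c/2)"
      have "h > 0" "h < d" "h \<in> {0..c}" using d c x unfolding h_def by (auto simp: min_def)
      hence "G 0 < G h" "G h \<le> G 0" using d y 1 by auto
      thus ?thesis by simp
    next
      case 2
      have "P c < 0" using c0 c by auto
      hence "P c / ((1-c^2)*arccos c) < 0" using Gd_sign(2)[of c] c x by simp
      from DERIV_neg_dec_left[OF dG this] obtain d where d: "d > 0" "\<forall>h>0. h < d \<longrightarrow> G c < G (c - h)"
        using c x by auto
      define h where "h = min (d/2) (c/2)"
      have "h > 0" "h < d" "c - h \<in> {0..c}" using d c x unfolding h_def by (auto simp: min_def)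
      hence "G c < G (c-h)" "G (c-h) \<le> G c" using d y 2 by auto
      thus ?thesis by simp
    next
      case 3
      have "P y / ((1-y^2)*arccos y) = 0"
      proof (rule DERIV_local_max[OF dG[OF y01]])
        show "0 < min y (c-y)" using 3 by simp
        show "\<forall>z. \<bar>y - z\<bar> < min y (c - y) \<longrightarrow> G z \<le> G y"
          using y(2) by (auto simp: abs_if split: if_splits)
      qed
      thus ?thesis using Gd_sign(3)[OF y01] by simp
    qed
  qed
  hence "G y = H y" using G_crit y01 by simp
  also have "\<dots> \<le> H x1" using H_max y01 by simp
  finally have "G y \<le> H x1" .
  moreover have "G x \<le> G y" using y(2) x c by simp
  ultimately show ?thesis by linarith
qed


lemma claimA: assumes z: "x1 \<le> z" "z < 1" shows "P z \<le> 0"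
proof (rule ccontr)
  assume "\<not> P z \<le> 0" hence Pz: "P z > 0" by simp
  obtain c0 where c0: "c0 < 1" "\<forall>y. c0 < y \<longrightarrow> y < 1 \<longrightarrow> P y < 0" using near1 by blast
  define w where "w = (max z c0 + 1)/2"
  have w: "z < w" "w < 1" "c0 < w" using z c0 unfolding w_def by auto
  have Pw: "P w < 0" using c0 w by auto
  have z0: "0 \<le> z" using z x1pos by simp
  have "(\<lambda>t. - P t) w \<le> 0"
  proof (rule no_cross[of z w "\<lambda>t. - P t" "\<lambda>t. - Pd t"])
    show "z \<le> w" using w by simp
    show "continuous_on {z..w} (\<lambda>t. - P t)" using contP[OF z0 w(2)] by (rule continuous_on_minus)
    show "(\<lambda>t. - P t) z \<le> 0" using Pz by simp
    fix u assume u: "z \<le> u" "u < w" "- P u = 0"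
    have uz: "u \<noteq> z" using u Pz by auto
    have u1: "x1 < u" "u < 1" using u uz z w by auto
    have "Pd u > 0" using Pd_pos[OF u1] u by simp
    moreover have "((\<lambda>t. - P t) has_real_derivative - Pd u) (at u)"
      using dP[of u] u1 x1pos by (intro DERIV_minus) auto
    ultimately show "((\<lambda>t. - P t) has_real_derivative - Pd u) (at u) \<and> - Pd u < 0" by simp
  qed
  thus False using Pw by simp
qed

lemma claimC: assumes v: "0 \<le> v" "v \<le> x" "x < 1" "P v < 0" shows "P x \<le> 0"
proof (cases "x1 \<le> v")
  case True
  thus ?thesis using claimA[of x] v by simp
next
  case False
  define m where "m = min x x1"
  have m: "v \<le> m" "m \<le> x" "m \<le> x1" "m < 1" using v False x1_lt1 unfolding m_def by auto
  have Pm: "P m \<le> 0"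
  proof (rule no_cross[of v m P Pd])
    show "v \<le> m" using m by simp
    show "continuous_on {v..m} P" using contP[OF v(1) m(4)] .
    show "P v \<le> 0" using v by simp
    fix u assume u: "v \<le> u" "u < m" "P u = 0"
    have u1: "0 \<le> u" "u < x1" "u < 1" using u m v by auto
    show "(P has_real_derivative Pd u) (at u) \<and> Pd u < 0"
      using dP[OF u1(1,3)] Pd_neg[OF u1(1,2) u(3)] by simp
  qed
  show ?thesis
  proof (cases "x \<le> x1")
    case True thus ?thesis using Pm m_def by simp
  next
    case False thus ?thesis using claimA[of x] v by simp
  qed
qed

lemma arccos_lb: assumes "0 \<le> y" "y < 1" shows "sqrt (2*(1-y)) \<le> arccos y"
proof -
  define t where "t = arccos y"
  have t: "0 \<le> t" "t \<le> pi" unfolding t_def using arccos_bounded assms by auto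
  have yc: "y = cos t" unfolding t_def using assms by simp
  have "cos (2*(t/2)) = 1 - 2 * sin (t/2) ^ 2" by (rule cos_double_sin)
  hence "1 - y = 2 * sin (t/2) ^ 2" unfolding yc by simp
  hence "2*(1-y) = (2 * sin (t/2))^2" by (simp add: power2_eq_square)
  hence "sqrt (2*(1-y)) = \<bar>2 * sin (t/2)\<bar>" by (metis real_sqrt_abs)
  also have "\<dots> = 2 * sin (t/2)" using sin_ge_zero[of "t/2"] t by simp
  also have "\<dots> \<le> t" using sin_x_le_x[of "t/2"] t by simp
  finally show ?thesis unfolding t_def .
qed

lemma Glow: assumes a12: "a = 1/2" and y: "0 \<le> y" "y < 1" shows "ln 2/2 + b*ln(1+y) \<le> G y"
proof -
  have pos: "sqrt (2*(1-y)) > 0" using y by simp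
  have "ln (sqrt (2*(1-y))) \<le> ln (arccos y)"
    using arccos_lb[OF y] pos basic(2)[OF y] by simp
  moreover have "ln (sqrt (2*(1-y))) = (ln 2 + ln (1-y))/2"
  proof -
    have "ln (2*(1-y)) = ln 2 + ln (1-y)" using y by (intro ln_mult_pos) auto
    moreover have "ln (sqrt (2*(1-y))) = ln (2*(1-y)) / 2" using y by (intro ln_sqrt) auto
    ultimately show ?thesis by simp
  qed
  moreover have "a*ln(1-y) = ln(1-y)/2" using a12 by simp
  ultimately show ?thesis unfolding G_def by argo
qed

lemma lower: assumes a12: "a = 1/2" and x: "0 < x" "x < 1"
  shows "min (ln (pi/2)) ((b+1/2)*ln 2) \<le> G x"
proof (cases "\<forall>v\<in>{0..x}. P v \<ge> 0")
  case True
  have "G 0 \<le> G x"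
  proof (rule DERIV_nonneg_imp_nondecreasing[of 0 x G])
    show "0 \<le> x" using x by simp
    fix t assume t: "0 \<le> t" "t \<le> x"
    have t1: "t < 1" using t x by simp
    have "P t \<ge> 0" using True t by auto
    hence "P t / ((1-t^2)*arccos t) \<ge> 0" using basic[OF t(1) t1] by simp
    thus "\<exists>y. (G has_real_derivative y) (at t) \<and> 0 \<le> y" using dG[OF t(1) t1] by blast
  qed
  moreover have "G 0 = ln (pi/2)" unfolding G_def by simp
  ultimately show ?thesis by simp
next
  case False
  then obtain v where v: "0 \<le> v" "v \<le> x" "P v < 0" by auto
  have bnd: "ln 2/2 + b*ln(1+y) \<le> G x" if y: "x < y" "y < 1" for y
  proof -
    have "G y \<le> G x"
    proof (rule DERIV_nonpos_imp_nonincreasing[of x y G])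
      show "x \<le> y" using y by simp
      fix t assume t: "x \<le> t" "t \<le> y"
      have t1: "0 \<le> t" "t < 1" using t x y by auto
      have "P t \<le> 0" using claimC[of v t] v t t1 by simp
      hence "P t / ((1-t^2)*arccos t) \<le> 0" using basic[OF t1] by (simp add: divide_nonpos_pos)
      thus "\<exists>z. (G has_real_derivative z) (at t) \<and> z \<le> 0" using dG[OF t1] by blast
    qed
    thus ?thesis using Glow[OF a12, of y] x y by simp
  qed
  have lim: "((\<lambda>y. ln 2/2 + b*ln(1+y)) \<longlongrightarrow> ln 2/2 + b*ln 2) (at_left (1::real))"
  proof -
    have "((\<lambda>y. 1 + y) \<longlongrightarrow> 1 + 1) (at_left (1::real))" by (intro tendsto_intros)
    hence "((\<lambda>y. 1 + y) \<longlongrightarrow> 2) (at_left (1::real))" by simp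
    hence "((\<lambda>y. ln (1 + y)) \<longlongrightarrow> ln 2) (at_left (1::real))" by (rule tendsto_ln) simp
    thus ?thesis by (intro tendsto_add[OF tendsto_const] tendsto_mult[OF tendsto_const])
  qed
  have ev: "eventually (\<lambda>y. ln 2/2 + b*ln(1+y) \<le> G x) (at_left (1::real))"
    using eventually_at_left_real[OF x(2)] by (rule eventually_mono) (use bnd in auto)
  have "ln 2/2 + b*ln 2 \<le> G x" by (rule tendsto_upperbound[OF lim ev]) simp
  thus ?thesis by (simp add: algebra_simps)
qed


lemma eG: assumes "0 < x" "x < 1"
  shows "arccos x = exp (G x) * ((1-x) powr a / (1+x) powr b)"
proof -
  have A: "arccos x > 0" using basic[of x] assms by simp
  have "exp (G x) = arccos x * exp (b*ln(1+x)) / exp (a*ln(1-x))"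
    unfolding G_def exp_diff exp_add using A by simp
  also have "\<dots> = arccos x * (1+x) powr b / (1-x) powr a" using assms by (simp add: powr_def)
  finally have "exp (G x) = arccos x * (1+x) powr b / (1-x) powr a" .
  moreover have "(1+x) powr b > 0" "(1-x) powr a > 0" using assms by auto
  ultimately show ?thesis by (simp add: field_simps)
qed

lemma eH: "exp (H x1) = ((1 + x1) powr (b + 1/2) * (1 - x1) powr (1/2 - a)) / (a + b + (a - b)*x1)"
proof -
  have Dp: "D x1 > 0" using basic[of x1] x1pos x1_lt1 by simp
  have "exp (H x1) = exp ((b+1/2)*ln(1+x1)) * exp ((1/2-a)*ln(1-x1)) / D x1"
    unfolding H_def exp_diff exp_add using Dp by simp
  also have "\<dots> = ((1 + x1) powr (b + 1/2) * (1 - x1) powr (1/2 - a)) / (a + b + (a - b)*x1)"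
    using x1pos x1_lt1 unfolding D_def by (simp add: powr_def)
  finally show ?thesis .
qed

end

theorem theorem2:
  fixes a b x\<^sub>1 :: real
  assumes "1/3 < a - b" and "a - b < 4 / pi^2"
    and "2/pi - b < a" and "a \<le> 1/2"
    and "16*a*b*(b - a) + (a + b)^2 > 0"
    and "x\<^sub>1 = ((a + b)*(2*b - 2*a + 1) - sqrt (16*a*b*(b - a) + (a + b)^2)) / (2*(a - b)^2)"
    and "x\<^sub>1 > 0"
  shows "\<forall>x. 0 < x \<and> x < 1 \<longrightarrow>
     (if a = 1/2 then min (2 powr (b + 1/2)) (pi/2) * ((1 - x) powr a / (1 + x) powr b) else 0) \<le> arccos x
   \<and> arccos x \<le> ((1 + x\<^sub>1) powr (b + 1/2) * (1 - x\<^sub>1) powr (1/2 - a)) / (a + b + (a - b)*x\<^sub>1)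
                    * ((1 - x) powr a / (1 + x) powr b)"
proof -
  interpret L a b x\<^sub>1 by unfold_locales (use assms in auto)
  show ?thesis
  proof (intro allI impI conjI)
    fix x :: real assume x: "0 < x \<and> x < 1"
    hence x0: "0 < x" "x < 1" by auto
    define E where "E = (1 - x) powr a / (1 + x) powr b"
    have Epos: "E > 0" unfolding E_def using x0 by auto
    have eg: "arccos x = exp (G x) * E" unfolding E_def by (rule eG[OF x0])
    have "exp (G x) \<le> exp (H x\<^sub>1)" using upper[OF x0] by simp
    hence "exp (G x) * E \<le> exp (H x\<^sub>1) * E" using Epos by (simp add: mult_right_mono)
    thus "arccos x \<le> ((1 + x\<^sub>1) powr (b + 1/2) * (1 - x\<^sub>1) powr (1/2 - a)) / (a + b + (a - b)*x\<^sub>1)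
                    * ((1 - x) powr a / (1 + x) powr b)"
      unfolding eg eH E_def[symmetric] .
    show "(if a = 1/2 then min (2 powr (b + 1/2)) (pi/2) * ((1 - x) powr a / (1 + x) powr b) else 0) \<le> arccos x"
    proof (cases "a = 1/2")
      case False
      thus ?thesis using basic(2)[of x] x0 by simp
    next
      case True
      have low: "min (ln (pi/2)) ((b+1/2)*ln 2) \<le> G x" by (rule lower[OF True x0])
      have "min (2 powr (b + 1/2)) (pi/2) \<le> exp (G x)"
      proof (cases "ln (pi/2) \<le> (b+1/2)*ln 2")
        case True
        hence "ln (pi/2) \<le> G x" using low by simp
        hence e1: "exp (ln (pi/2)) \<le> exp (G x)" by (subst exp_le_cancel_iff)
        have e2: "exp (ln (pi/2)) = pi/2" using pi_gt_zero by (intro exp_ln) simp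
        have "pi/2 \<le> exp (G x)" using e1 unfolding e2 .
        thus ?thesis by simp
      next
        case False
        hence "(b+1/2)*ln 2 \<le> G x" using low by simp
        hence "exp ((b+1/2)*ln 2) \<le> exp (G x)" by simp
        hence "2 powr (b+1/2) \<le> exp (G x)" by (simp add: powr_def)
        thus ?thesis by simp
      qed
      hence "min (2 powr (b + 1/2)) (pi/2) * E \<le> exp (G x) * E" using Epos by (simp add: mult_right_mono)
      hence me: "min (2 powr (b + 1/2)) (pi/2) * E \<le> arccos x" unfolding eg .
      show ?thesis unfolding if_P[OF True] using me unfolding E_def .
    qed
  qed
qed

end
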